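(* Let $A$ be an $n\times n$ Dickson matrix over $\mathbb{F}_{q^n}$ such that $\mathrm{rank}\big(A+\mathrm{diag}(d,d^q,\dots,d^{q^{n-1}})\big)=1$ for some $d\in\mathbb{F}_{q^n}$, and let $B$ be a Dickson matrix such that $A$ and $B$ have equal corresponding principal minors of all orders. Then $A$ is diagonally similar to $B$.
   Context: A Dickson matrix is the $n\times n$ matrix indexed by $\mathbb{Z}_n$ with $A[i|j]=a_{j-i}^{q^i}$ associated to a $q$-polynomial $\sum_{j=0}^{n-1}a_jx^{q^j}\in\mathbb{F}_{q^n}[x]$. Equal corresponding principal minors: $\det A[\alpha|\alpha]=\det B[\alpha|\alpha]$ for all nonempty $\alpha\subseteq\mathbb{Z}_n$. Diagonally similar: $B=D^{-1}AD$ for an invertible diagonal matrix $D$. *)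

theory Defs
  imports "Jordan_Normal_Form.DL_Rank_Submatrix" "Jordan_Normal_Form.Determinant"
    "HOL-Computational_Algebra.Primes"
begin

text \<open>Dickson matrix of the q-polynomial with coefficients a 0, ..., a (n-1),
  rows/columns indexed by 0..n-1 (representing Z_n): entry (i,j) is
  a ((j - i) mod n) raised to the power q^i.\<close>
definition dickson_mat :: "nat \<Rightarrow> nat \<Rightarrow> (nat \<Rightarrow> 'a::field) \<Rightarrow> 'a mat" where
  "dickson_mat q n a = mat n n (\<lambda>(i,j). a ((j + n - i) mod n) ^ (q ^ i))"

definition is_dickson_mat :: "nat \<Rightarrow> nat \<Rightarrow> 'a::field mat \<Rightarrow> bool" where
  "is_dickson_mat q n A \<longleftrightarrow> (\<exists>a. A = dickson_mat q n a)"

definition equal_principal_minors :: "nat \<Rightarrow> 'a::field mat \<Rightarrow> 'a mat \<Rightarrow> bool" where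
  "equal_principal_minors n A B \<longleftrightarrow>
     (\<forall>\<alpha>. \<alpha> \<subseteq> {0..<n} \<longrightarrow> \<alpha> \<noteq> {} \<longrightarrow>
        det (submatrix A \<alpha> \<alpha>) = det (submatrix B \<alpha> \<alpha>))"

definition diagonally_similar :: "nat \<Rightarrow> 'a::field mat \<Rightarrow> 'a mat \<Rightarrow> bool" where
  "diagonally_similar n A B \<longleftrightarrow>
     (\<exists>D Dinv. D \<in> carrier_mat n n \<and> Dinv \<in> carrier_mat n n \<and> diagonal_mat D \<and>
        D * Dinv = 1\<^sub>m n \<and> Dinv * D = 1\<^sub>m n \<and> B = Dinv * A * D)"

end

theory Submission
  imports Defs
begin

lemma CHAR_dvd_card_field: "CHAR('a::{field,finite}) dvd card (UNIV :: 'a set)"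
proof -
  define c where "c = CHAR('a)"
  have c0: "c > 0" unfolding c_def by (rule finite_imp_CHAR_pos) simp
  define H where "H = (range of_nat :: 'a set)"
  have ofm: "(of_nat m :: 'a) = of_nat (m mod c)" for m
  proof -
    have "(of_nat m :: 'a) = of_nat (m mod c + c * (m div c))" by simp
    also have "\<dots> = of_nat (m mod c)" unfolding of_nat_add of_nat_mult c_def by simp
    finally show ?thesis .
  qed
  have Heq: "H = of_nat ` {..<c}"
  proof
    show "H \<subseteq> of_nat ` {..<c}"
    proof
      fix x assume "x \<in> H"
      then obtain m where "x = of_nat m" unfolding H_def by auto
      then show "x \<in> of_nat ` {..<c}" using ofm[of m] c0 by (auto intro!: image_eqI[where x="m mod c"])
    qed
    show "of_nat ` {..<c} \<subseteq> H" unfolding H_def by auto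
  qed
  have inj: "inj_on (of_nat :: nat \<Rightarrow> 'a) {..<c}"
  proof (rule inj_onI, rule ccontr)
    fix i j assume ij: "i \<in> {..<c}" "j \<in> {..<c}" "(of_nat i :: 'a) = of_nat j" "i \<noteq> j"
    { fix i j assume ij: "i < c" "j < c" "(of_nat i :: 'a) = of_nat j" "i < j"
      hence "(of_nat (j - i) :: 'a) = 0" by (simp add: of_nat_diff)
      hence "c dvd (j - i)" unfolding c_def by (simp add: of_nat_eq_0_iff_char_dvd)
      hence False using ij by (simp add: nat_dvd_not_less) }
    then show False using ij by (metis lessThan_iff linorder_neq_iff)
  qed
  have cardH: "card H = c" unfolding Heq using card_image[OF inj] by simp
  have Hadd: "x + y \<in> H" if "x \<in> H" "y \<in> H" for x y
    using that unfolding H_def by (auto simp flip: of_nat_add)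
  have Hneg: "- x \<in> H" if hx: "x \<in> H" for x
  proof -
    obtain m where m: "x = of_nat m" using hx unfolding H_def by auto
    have "(of_nat (c*m - m) :: 'a) = of_nat (c*m) - of_nat m" using c0 by (simp add: of_nat_diff)
    also have "\<dots> = - of_nat m" unfolding of_nat_mult c_def by simp
    finally show ?thesis using m unfolding H_def by (metis rangeI)
  qed
  have H0: "0 \<in> H" unfolding H_def by (metis of_nat_0 rangeI)
  define C where "C = (\<lambda>x. (+) x ` H) ` UNIV"
  have "c * card C = card (\<Union>C)"
  proof (rule card_partition)
    show "finite C" "finite (\<Union>C)" by auto
    show "\<And>X. X \<in> C \<Longrightarrow> card X = c"
      unfolding C_def using cardH by (auto simp: card_image inj_on_def)
    show "\<And>X Y. X \<in> C \<Longrightarrow> Y \<in> C \<Longrightarrow> X \<noteq> Y \<Longrightarrow> X \<inter> Y = {}"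
    proof -
      fix X Y assume XY: "X \<in> C" "Y \<in> C" "X \<noteq> Y"
      obtain x y where X: "X = (+) x ` H" and Y: "Y = (+) y ` H" using XY unfolding C_def by auto
      show "X \<inter> Y = {}"
      proof (rule ccontr)
        assume "X \<inter> Y \<noteq> {}"
        then obtain h1 h2 where h: "h1 \<in> H" "h2 \<in> H" "x + h1 = y + h2" unfolding X Y by auto
        have sub: "(+) x ` H \<subseteq> (+) y ` H" if "x + h1 = y + h2" "h1 \<in> H" "h2 \<in> H" for x y h1 h2
        proof
          fix z assume "z \<in> (+) x ` H"
          then obtain h where "h \<in> H" "z = x + h" by auto
          hence "z = y + (h2 + (- h1) + h)" using that by (simp add: algebra_simps)
          moreover have "h2 + (- h1) + h \<in> H" using Hadd Hneg that \<open>h \<in> H\<close> by blast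
          ultimately show "z \<in> (+) y ` H" by auto
        qed
        have "X = Y" unfolding X Y using sub[OF h(3) h(1) h(2)] sub[of y h2 x h1] h by auto
        thus False using XY by simp
      qed
    qed
  qed
  moreover have "\<Union>C = UNIV" unfolding C_def using H0 by force
  ultimately show ?thesis unfolding c_def by (metis dvd_triv_left)
qed


lemma frob:
  fixes x y :: "'a::{field,finite}"
  assumes "prime p" "q = p^k" "card (UNIV::'a set) = q^n"
  shows "(x+y)^(q^i) = x^(q^i) + y^(q^i)"
proof -
  have c0: "CHAR('a) > 0" by (rule finite_imp_CHAR_pos) simp
  have cp: "prime CHAR('a)" using c0 prime_CHAR_semidom by blast
  have "CHAR('a) dvd p^(k*n)" using CHAR_dvd_card_field[where 'a='a] assms by (simp add: power_mult)
  hence "CHAR('a) dvd p" using cp prime_dvd_power by blast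
  hence cp2: "CHAR('a) = p" using cp assms(1) by (simp add: primes_dvd_imp_eq)
  show ?thesis
    by (rule freshmans_dream'[where n="k*i"]) (use cp cp2 assms in \<open>auto simp: power_mult\<close>)
qed




lemma xy_eq:
  fixes x y p :: "'a::field"
  assumes "x + y = 2*p" "x*y = p*p" shows "x = p"
proof -
  have "(x-p)*(x-p) = x*x - (x+y)*x + x*y" using assms by (simp add: algebra_simps)
  also have "\<dots> = 0" by (simp add: algebra_simps)
  finally show ?thesis by simp
qed

lemma core:
  fixes f g m :: "nat \<Rightarrow> nat \<Rightarrow> 'a::field"
  assumes offdiag: "\<And>i j. i<n \<Longrightarrow> j<n \<Longrightarrow> i\<noteq>j \<Longrightarrow> m i j = f i j"
  and R: "\<And>i j k l. i<n \<Longrightarrow> j<n \<Longrightarrow> k<n \<Longrightarrow> l<n \<Longrightarrow> m i j * m k l = m i l * m k j"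
  and nz: "\<And>i. i<n \<Longrightarrow> m i i \<noteq> 0"
  and F1: "\<And>i. i<n \<Longrightarrow> g i i = f i i"
  and F2: "\<And>i j. i<n \<Longrightarrow> j<n \<Longrightarrow> i\<noteq>j \<Longrightarrow> g i j * g j i = f i j * f j i"
  and F3: "\<And>i j. i<n \<Longrightarrow> j<n \<Longrightarrow> 0<i \<Longrightarrow> i<j \<Longrightarrow>
     g 0 i * g i j * g j 0 + g 0 j * g j i * g i 0 = f 0 i * f i j * f j 0 + f 0 j * f j i * f i 0"
  and n0: "0<n"
  shows "\<exists>D. (\<forall>j<n. D j \<noteq> 0) \<and> (\<forall>i<n. \<forall>j<n. g i j = f i j * D j / D i)"
proof -
  define D where "D j = (if j = 0 then 1 else g 0 j / f 0 j)" for j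
  have pair: "g i j * g j i = m i i * m j j" if "i<n" "j<n" "i\<noteq>j" for i j
    using F2[OF that] offdiag[OF that] offdiag[of j i] that R[of i j j i] by auto
  have pairf: "f i j * f j i = m i i * m j j" if "i<n" "j<n" "i\<noteq>j" for i j
    using offdiag[OF that] offdiag[of j i] that R[of i j j i] by auto
  have gnz: "g i j \<noteq> 0" if "i<n" "j<n" "i\<noteq>j" for i j
    using pair[OF that] nz that by auto
  have fnz: "f i j \<noteq> 0" if "i<n" "j<n" "i\<noteq>j" for i j
    using pairf[OF that] nz that by auto
  have cyc: "g 0 i * g i j * g j 0 = m 0 0 * m i i * m j j \<and> g 0 j * g j i * g i 0 = m 0 0 * m i i * m j j"
    if "i<n" "j<n" "0<i" "i<j" for i j
  proof -
    let ?P = "m 0 0 * m i i * m j j"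
    have XA: "f 0 i * f i j * f j 0 = ?P"
      using offdiag[of 0 i] offdiag[of i j] offdiag[of j 0] that R[of i j j 0] R[of 0 i i 0]
      by (auto simp: algebra_simps)
    have YA: "f 0 j * f j i * f i 0 = ?P"
      using offdiag[of 0 j] offdiag[of j i] offdiag[of i 0] that R[of j i i 0] R[of 0 j j 0]
      by (auto simp: algebra_simps)
    have prod: "(g 0 i * g i j * g j 0) * (g 0 j * g j i * g i 0) = ?P * ?P"
    proof -
      have "(g 0 i * g i j * g j 0) * (g 0 j * g j i * g i 0) = (g 0 i * g i 0) * (g i j * g j i) * (g j 0 * g 0 j)"
        by (simp add: algebra_simps)
      also have "\<dots> = (m 0 0 * m i i) * (m i i * m j j) * (m j j * m 0 0)"
        using pair[of 0 i] pair[of i j] pair[of j 0] that by auto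
      finally show ?thesis by (simp add: algebra_simps)
    qed
    have sum: "(g 0 i * g i j * g j 0) + (g 0 j * g j i * g i 0) = 2 * ?P"
      using F3[OF that] XA YA by simp
    show ?thesis
      using xy_eq[OF sum prod] xy_eq[of "g 0 j * g j i * g i 0" "g 0 i * g i j * g j 0" ?P] sum prod
      by (auto simp: algebra_simps)
  qed
  have cyc2: "g 0 i * g i j * g j 0 = m 0 0 * m i i * m j j"
    if "i<n" "j<n" "0<i" "0<j" "i\<noteq>j" for i j
  proof (cases "i<j")
    case True then show ?thesis using cyc[of i j] that by auto
  next
    case False then show ?thesis using cyc[of j i] that by (auto simp: algebra_simps)
  qed
  have "\<forall>j<n. D j \<noteq> 0" using gnz fnz by (auto simp: D_def)
  moreover have "g i j = f i j * D j / D i" if "i<n" "j<n" for i j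
  proof -
    consider "i = j" | "i = 0" "j \<noteq> 0" | "i \<noteq> 0" "j = 0" | "i\<noteq>0" "j\<noteq>0" "i\<noteq>j" by force
    then show ?thesis
    proof cases
      case 1 then show ?thesis using F1 that gnz fnz by (auto simp: D_def)
    next
      case 2 then show ?thesis using that fnz[of 0 j] by (auto simp: D_def)
    next
      case 3
      have "g i 0 * g 0 i = f i 0 * f 0 i" using F2[of i 0] that 3 by auto
      then show ?thesis using 3 that fnz[of 0 i] gnz[of 0 i] by (auto simp: D_def field_simps)
    next
      case 4
      have a: "f 0 i * f i j = f 0 j * m i i"
        using R[of 0 i i j] offdiag[of 0 i] offdiag[of i j] offdiag[of 0 j] that 4 by auto
      have b: "g 0 i * g i j * g j 0 = m 0 0 * m i i * m j j" using cyc2 that 4 by auto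
      have c: "g j 0 * g 0 j = m j j * m 0 0" using pair[of j 0] that 4 by auto
      have gj0: "g j 0 \<noteq> 0" "g 0 j \<noteq> 0" "g 0 i \<noteq> 0" "f 0 i \<noteq> 0" "f 0 j \<noteq> 0"
        using gnz fnz that 4 by auto
      have "g i j = m i i * g 0 j / g 0 i"
      proof -
        have e: "g j 0 * g 0 j = m 0 0 * m j j" using c by (simp add: mult.commute)
        have h: "g 0 i * g i j * (g j 0 * g 0 j) = m i i * g 0 j * (m 0 0 * m j j)"
          using b by (simp add: algebra_simps)
        hence "g 0 i * g i j * (m 0 0 * m j j) = m i i * g 0 j * (m 0 0 * m j j)"
          unfolding e .
        hence "g 0 i * g i j = m i i * g 0 j" using nz[of 0] nz[of j] that by simp
        thus ?thesis using gj0 by (simp add: field_simps)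
      qed
      moreover have "f i j * D j / D i = m i i * g 0 j / g 0 i"
        using 4 gj0 a by (simp add: D_def field_simps)
      ultimately show ?thesis by simp
    qed
  qed
  ultimately show ?thesis by blast
qed


lemma det2: "det (mat 2 2 f) = (f(0,0)*f(1,1) - f(0,1)*f(1,0) :: 'a::comm_ring_1)"
  apply (subst laplace_expansion_column[of _ 2 0])
  apply (auto simp: cofactor_def mat_delete_def numeral_2_eq_2 lessThan_Suc det_single)
  done

lemma det3: "det (mat 3 3 f) = (f(0,0)*f(1,1)*f(2,2) + f(0,1)*f(1,2)*f(2,0) + f(0,2)*f(1,0)*f(2,1)
   - f(0,0)*f(1,2)*f(2,1) - f(0,1)*f(1,0)*f(2,2) - f(0,2)*f(1,1)*f(2,0) :: 'a::comm_ring_1)"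
  apply (subst laplace_expansion_column[of _ 3 0])
    apply (auto simp: cofactor_def mat_delete_def numeral_3_eq_3 lessThan_Suc)
  apply (subst det2[unfolded numeral_2_eq_2])+
  apply (auto simp: insert_index_def numeral_2_eq_2 algebra_simps)
  done

lemma Least_eq_i: "(LEAST a::nat. a = i) = i" by (rule Least_equality) auto

lemma pick1: "pick {i} 0 = i" by (simp, rule Least_equality, auto)

lemma pick2: assumes "i < j" shows "pick {i,j} 0 = i" "pick {i,j} 1 = j"
proof -
  show a: "pick {i,j} 0 = i" using assms by (auto intro!: Least_equality)
  show "pick {i,j} 1 = j" using assms a by (auto intro!: Least_equality)
qed

lemma pick3: assumes "i < j" "j < k" shows "pick {i,j,k} 0 = i" "pick {i,j,k} 1 = j" "pick {i,j,k} 2 = k"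
proof -
  show a: "pick {i,j,k} 0 = i" using assms by (auto intro!: Least_equality)
  show b: "pick {i,j,k} 1 = j" using assms a by (auto intro!: Least_equality)
  have b': "pick {i,j,k} (Suc 0) = j" using b by simp
  have "pick {i,j,k} 2 = pick {i,j,k} (Suc (Suc 0))" by (simp add: numeral_2_eq_2)
  also have "\<dots> = k" unfolding pick.simps(2)[of _ "Suc 0"] b' using assms by (auto intro!: Least_equality)
  finally show "pick {i,j,k} 2 = k" .
qed

lemma sub1: assumes "M \<in> carrier_mat n n" "i < n"
  shows "det (submatrix M {i} {i}) = M $$ (i,i)"
proof -
  have c: "{x. x < dim_row M \<and> x \<in> {i}} = {i}" "{x. x < dim_col M \<and> x \<in> {i}} = {i}" using assms by auto
  show ?thesis using assms unfolding submatrix_def c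
    by (subst det_single) (auto simp: Least_eq_i)
qed

lemma sub2: assumes "M \<in> carrier_mat n n" "i < k" "k < n" "j < l" "l < n"
  shows "det (submatrix M {i,k} {j,l}) = M$$(i,j)*M$$(k,l) - M$$(i,l)*M$$(k,j)"
proof -
  have c: "{x. x < dim_row M \<and> x \<in> {i,k}} = {i,k}" "{x. x < dim_col M \<and> x \<in> {j,l}} = {j,l}" using assms by auto
  have "submatrix M {i,k} {j,l} = mat 2 2 (\<lambda>(a,b). M $$ (pick {i,k} a, pick {j,l} b))"
    using assms unfolding submatrix_def c by auto
  then show ?thesis using pick2[of i k] pick2[of j l] assms by (simp add: det2)
qed

lemma sub3: assumes "M \<in> carrier_mat n n" "i < j" "j < k" "k < n"
  shows "det (submatrix M {i,j,k} {i,j,k}) =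
    M$$(i,i)*M$$(j,j)*M$$(k,k) + M$$(i,j)*M$$(j,k)*M$$(k,i) + M$$(i,k)*M$$(j,i)*M$$(k,j)
   - M$$(i,i)*M$$(j,k)*M$$(k,j) - M$$(i,j)*M$$(j,i)*M$$(k,k) - M$$(i,k)*M$$(j,j)*M$$(k,i)"
proof -
  have c: "{x. x < dim_row M \<and> x \<in> {i,j,k}} = {i,j,k}" "{x. x < dim_col M \<and> x \<in> {i,j,k}} = {i,j,k}" using assms by auto
  have "submatrix M {i,j,k} {i,j,k} = mat 3 3 (\<lambda>(a,b). M $$ (pick {i,j,k} a, pick {i,j,k} b))"
    using assms unfolding submatrix_def c by auto
  then show ?thesis using pick3[of i j k] assms by (simp add: det3)
qed

lemma rank_minor2:
  fixes M :: "'a::field mat"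
  assumes "M \<in> carrier_mat n n" "vec_space.rank n M \<le> 1" "i<n" "j<n" "k<n" "l<n"
  shows "M$$(i,j)*M$$(k,l) = M$$(i,l)*M$$(k,j)"
proof -
  have ord: "M$$(i,j)*M$$(k,l) = M$$(i,l)*M$$(k,j)" if "i<k" "j<l" "k<n" "l<n" for i j k l
  proof (rule ccontr)
    assume "M$$(i,j)*M$$(k,l) \<noteq> M$$(i,l)*M$$(k,j)"
    hence "det (submatrix M {i,k} {j,l}) \<noteq> 0" using sub2[OF assms(1) that(1) that(3) that(2) that(4)] by simp
    from vec_space.rank_gt_minor[OF assms(1) this]
    have "card {x. x < n \<and> x \<in> {j,l}} \<le> vec_space.rank n M" .
    moreover have "{x. x < n \<and> x \<in> {j,l}} = {j,l}" using that by auto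
    ultimately show False using assms(2) that by auto
  qed
  show ?thesis
  proof (cases "i = k \<or> j = l")
    case True then show ?thesis by (auto simp: mult.commute)
  next
    case False
    then consider "i<k" "j<l" | "i<k" "l<j" | "k<i" "j<l" | "k<i" "l<j" by linarith
    then show ?thesis
    proof cases
      case 1 then show ?thesis using ord[of i k j l] assms by auto
    next
      case 2 then show ?thesis using ord[of i k l j] assms by (auto simp: mult.commute)
    next
      case 3 then show ?thesis using ord[of k i j l] assms by (auto simp: mult.commute)
    next
      case 4 then show ?thesis using ord[of k i l j] assms by (auto simp: mult.commute)
    qed
  qed
qed


theorem mainTheorem10:
  fixes p k q n :: nat and A B :: "'a::{field,finite} mat" and d :: 'a
  assumes "prime p" and "k \<ge> 1" and "q = p ^ k" and "n \<ge> 1"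
    and "card (UNIV :: 'a set) = q ^ n"
    and "is_dickson_mat q n A"
    and "vec_space.rank n (A + mat_diag n (\<lambda>i. d ^ (q ^ i))) = 1"
    and "is_dickson_mat q n B"
    and "equal_principal_minors n A B"
  shows "diagonally_similar n A B"
proof -
  obtain a where Ad: "A = dickson_mat q n a" using assms(6) unfolding is_dickson_mat_def by blast
  obtain b where Bd: "B = dickson_mat q n b" using assms(8) unfolding is_dickson_mat_def by blast
  have Ac: "A \<in> carrier_mat n n" and Bc: "B \<in> carrier_mat n n"
    unfolding Ad Bd dickson_mat_def by auto
  have Aij: "A $$ (i,j) = a ((j + n - i) mod n) ^ (q ^ i)" if "i<n" "j<n" for i j
    using that unfolding Ad dickson_mat_def by auto
  define M where "M = A + mat_diag n (\<lambda>i. d ^ (q ^ i))"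
  have Mc: "M \<in> carrier_mat n n" unfolding M_def using Ac by auto
  have Mij: "M $$ (i,j) = A $$ (i,j) + (if i = j then d ^ (q ^ i) else 0)" if "i<n" "j<n" for i j
    using that Ac unfolding M_def by (auto simp: mat_diag_def)
  have rk: "vec_space.rank n M = 1" using assms(7) unfolding M_def .
  have R: "M$$(i,j)*M$$(k,l) = M$$(i,l)*M$$(k,j)" if "i<n" "j<n" "k<n" "l<n" for i j k l
    using rank_minor2[OF Mc _ that] rk by simp
  have q0: "q > 0" using assms(1,3) prime_gt_0_nat by simp
  define c where "c = a 0 + d"
  have Mii: "M $$ (i,i) = c ^ (q ^ i)" if "i<n" for i
    using that Mij[of i i] Aij[of i i] frob[OF assms(1,3,5)] by (simp add: c_def)
  have c0: "c \<noteq> 0"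
  proof
    assume c: "c = 0"
    have az: "a j = 0" if "0<j" "j<n" for j
    proof -
      have "M$$(0,j)*M$$(n-j,0) = M$$(0,0)*M$$(n-j,j)" using R[of 0 j "n-j" 0] that by auto
      moreover have "M$$(0,0) = 0" using Mii[of 0] c that by simp
      moreover have "M$$(0,j) = a j" using Mij[of 0 j] Aij[of 0 j] that by simp
      moreover have "M$$(n-j,0) = a j ^ (q ^ (n-j))" using Mij[of "n-j" 0] Aij[of "n-j" 0] that by simp
      ultimately show ?thesis by auto
    qed
    have "M = 0\<^sub>m n n"
    proof (rule eq_matI)
      fix i j assume ij: "i < dim_row (0\<^sub>m n n :: 'a mat)" "j < dim_col (0\<^sub>m n n :: 'a mat)"
      show "M $$ (i,j) = 0\<^sub>m n n $$ (i,j)"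
      proof (cases "i = j")
        case True then show ?thesis using Mii[of i] c q0 ij by simp
      next
        case False
        have "(j + n - i) mod n \<noteq> 0"
        proof (cases "i < j")
          case True
          then have e: "j + n - i = (j - i) + n" by simp
          have "j - i < n" using ij by auto
          have "(j + n - i) mod n = (j - i) mod n" by (metis e mod_add_self2)
          then show ?thesis using True \<open>j - i < n\<close> by simp
        next
          case False2: False
          then have "j + n - i < n" "0 < j + n - i" using False ij by auto
          then show ?thesis by simp
        qed
        then have "a ((j + n - i) mod n) = 0" using az ij by simp
        then show ?thesis using Mij[of i j] Aij[of i j] False ij q0 by simp
      qed
    qed (use Mc in auto)
    then have "vec_space.rank n M = 0" by (simp add: vec_space.rank_0I)
    then show False using rk by simp
  qed
  have nz: "M $$ (i,i) \<noteq> 0" if "i<n" for i using Mii[OF that] c0 by simp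
  have epm: "det (submatrix A S S) = det (submatrix B S S)" if "S \<subseteq> {0..<n}" "S \<noteq> {}" for S
    using assms(9) that unfolding equal_principal_minors_def by blast
  have F1: "B$$(i,i) = A$$(i,i)" if "i<n" for i
    using epm[of "{i}"] sub1[OF Ac that] sub1[OF Bc that] that by auto
  have F2o: "B$$(i,j) * B$$(j,i) = A$$(i,j) * A$$(j,i)" if "i<j" "j<n" for i j
    using epm[of "{i,j}"] sub2[OF Ac that that] sub2[OF Bc that that] that F1[of i] F1[of j] by auto
  have F2: "B$$(i,j) * B$$(j,i) = A$$(i,j) * A$$(j,i)" if "i<n" "j<n" "i\<noteq>j" for i j
  proof (cases "i<j")
    case True then show ?thesis using F2o that by auto
  next
    case False then show ?thesis using F2o[of j i] that by (auto simp: mult.commute)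
  qed
  have F3: "B$$(0,i) * B$$(i,j) * B$$(j,0) + B$$(0,j) * B$$(j,i) * B$$(i,0)
     = A$$(0,i) * A$$(i,j) * A$$(j,0) + A$$(0,j) * A$$(j,i) * A$$(i,0)"
    if "i<n" "j<n" "0<i" "i<j" for i j
  proof -
    have "det (submatrix A {0,i,j} {0,i,j}) = det (submatrix B {0,i,j} {0,i,j})"
      using epm[of "{0,i,j}"] that by auto
    then show ?thesis
      unfolding sub3[OF Ac that(3,4,2)] sub3[OF Bc that(3,4,2)]
      using F1[of 0] F1[of i] F1[of j] F2[of 0 i] F2[of i j] F2[of 0 j] that
      by (simp add: algebra_simps)
  qed
  obtain Dv where Dnz: "\<forall>j<n. Dv j \<noteq> 0" and Deq: "\<forall>i<n. \<forall>j<n. B$$(i,j) = A$$(i,j) * Dv j / Dv i"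
    using core[of n "\<lambda>i j. M$$(i,j)" "\<lambda>i j. A$$(i,j)" "\<lambda>i j. B$$(i,j)"] Mij R nz F1 F2 F3 assms(4) by force
  define D where "D = mat_diag n Dv"
  define Dinv where "Dinv = mat_diag n (\<lambda>i. inverse (Dv i))"
  have "D * Dinv = 1\<^sub>m n"
  proof -
    have "D * Dinv = mat_diag n (\<lambda>i. Dv i * inverse (Dv i))" unfolding D_def Dinv_def by simp
    also have "\<dots> = mat_diag n (\<lambda>i. 1)" using Dnz by (auto simp: mat_diag_def intro!: eq_matI)
    finally show ?thesis by simp
  qed
  moreover have "Dinv * D = 1\<^sub>m n"
  proof -
    have "Dinv * D = mat_diag n (\<lambda>i. inverse (Dv i) * Dv i)" unfolding D_def Dinv_def by simp
    also have "\<dots> = mat_diag n (\<lambda>i. 1)" using Dnz by (auto simp: mat_diag_def intro!: eq_matI)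
    finally show ?thesis by simp
  qed
  moreover have "B = Dinv * A * D"
  proof -
    have "Dinv * A = mat n n (\<lambda>(i,j). inverse (Dv i) * A $$ (i,j))"
      unfolding Dinv_def by (rule mat_diag_mult_left[OF Ac])
    moreover have "mat n n (\<lambda>(i,j). inverse (Dv i) * A $$ (i,j)) * D
       = mat n n (\<lambda>(i,j). mat n n (\<lambda>(i,j). inverse (Dv i) * A $$ (i,j)) $$ (i,j) * Dv j)"
      unfolding D_def by (rule mat_diag_mult_right) auto
    ultimately have "Dinv * A * D = mat n n (\<lambda>(i,j). inverse (Dv i) * A $$ (i,j) * Dv j)"
      by (auto intro!: eq_matI)
    then show ?thesis using Bc Deq Dnz by (auto intro!: eq_matI simp: field_simps)
  qed
  moreover have "diagonal_mat D" unfolding D_def diagonal_mat_def mat_diag_def by auto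
  ultimately have fin: "D * Dinv = 1\<^sub>m n" "Dinv * D = 1\<^sub>m n" "B = Dinv * A * D" "diagonal_mat D"
    by auto
  have "D \<in> carrier_mat n n" "Dinv \<in> carrier_mat n n" unfolding D_def Dinv_def by auto
  with fin show ?thesis unfolding diagonally_similar_def by blast
qed

end
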